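(* The Lie algebra $\Lambda(\mathbb{Q}\mathrm{Tree})$ is not finitely generated. Furthermore, the Lie algebra $\Lambda(\mathbb{Q}\mathrm{Tree}^-)$ is not finitely generated either.
   Context: $\mathrm{Tree}((m))$, $m\ge1$, is the set of planar rooted trees with one root at the bottom and $m$ leaves at the top labeled $1,\dots,m$ from left to right, every internal vertex having at least two inputs; equivalently, meaningful ways of inserting parentheses into the word $12\cdots m$ (e.g. $\mathrm{Tree}((1))=\{1\}$, $\mathrm{Tree}((2))=\{(12)\}$, $\mathrm{Tree}((3))=\{((12)3),(1(23)),(123)\}$). Composition $S\circ_iT$ grafts the root of $T$ to the $i$-th leaf of $S$; this makes $\mathrm{Tree}$ a nonsymmetric operad of sets with unit the trivial tree $1$. For $c\in\mathrm{Tree}((m))$, $m\ge2$, the face $\partial_ic\in\mathrm{Tree}((m-1))$ is obtained by erasing the $i$-th leaf of $c$ (suppressing any vertex left with one input), e.g. $\partial_i((1(23))4)=((12)3)$ for $1\le i\le3$, $\partial_4((1(23))4)=(1(23))$. The operad $\mathrm{Tree}^-$ has $\mathrm{Tree}^-((0))=\{\circ\}$, $\mathrm{Tree}^-((m))=\mathrm{Tree}((m))$ for $m\ge1$, grafting compositions, and $c\circ_i\circ=\partial_ic$, $1\circ_1\circ=\circ$. For a nonsymmetric operad of sets $\mathcal{C}$, $\Lambda(\mathbb{Q}\mathcal{C})=\bigoplus_{m\ge0}\mathbb{Q}\mathcal{C}((m))$ with Lie bracket $[c,d]=\sum_{t=1}^{j}d\circ_tc-\sum_{s=1}^{k}c\circ_sd$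 for $c\in\mathcal{C}((k))$, $d\in\mathcal{C}((j))$, extended bilinearly. *)

theory Defs
  imports Complex_Main
begin

text \<open>A planar rooted tree is either the trivial tree (a single leaf) or a vertex
with an ordered list of subtrees.  Leaves are numbered 1,...,m from left to right.\<close>

datatype ptree = Leaf | Node "ptree list"

fun leaves :: "ptree \<Rightarrow> nat" where
  "leaves Leaf = 1"
| "leaves (Node ts) = sum_list (map leaves ts)"

inductive wf_tree :: "ptree \<Rightarrow> bool" where
  "wf_tree Leaf"
| "\<lbrakk>length ts \<ge> 2; \<forall>t\<in>set ts. wf_tree t\<rbrakk> \<Longrightarrow> wf_tree (Node ts)"

text \<open>Grafting: graft S i T grafts the root of T onto the i-th leaf of S (1-based).\<close>
fun graft :: "ptree \<Rightarrow> nat \<Rightarrow> ptree \<Rightarrow> ptree"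
and graft_list :: "ptree list \<Rightarrow> nat \<Rightarrow> ptree \<Rightarrow> ptree list" where
  "graft Leaf i T = (if i = 1 then T else Leaf)"
| "graft (Node ts) i T = Node (graft_list ts i T)"
| "graft_list [] i T = []"
| "graft_list (t # ts) i T =
     (if i \<le> leaves t then graft t i T # ts else t # graft_list ts (i - leaves t) T)"

text \<open>Erasing the i-th leaf, suppressing vertices left with one input.
  The result is None exactly when the whole tree disappears (the trivial tree).\<close>
fun erase :: "ptree \<Rightarrow> nat \<Rightarrow> ptree option"
and erase_list :: "ptree list \<Rightarrow> nat \<Rightarrow> ptree list" where
  "erase Leaf i = (if i = 1 then None else Some Leaf)"
| "erase (Node ts) i =
     (case erase_list ts i of [] \<Rightarrow> None | [t] \<Rightarrow> Some t | us \<Rightarrow> Some (Node us))"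
| "erase_list [] i = []"
| "erase_list (t # ts) i =
     (if i \<le> leaves t then (case erase t i of None \<Rightarrow> ts | Some u \<Rightarrow> u # ts)
      else t # erase_list ts (i - leaves t))"

definition face :: "ptree \<Rightarrow> nat \<Rightarrow> ptree" where
  "face c i = the (erase c i)"

definition Tree :: "ptree set" where
  "Tree = {t. wf_tree t}"

text \<open>Tree^-: None is the extra arity-0 element \<open>\<circ>\<close>, Some t is a tree t.\<close>
definition TreeM :: "ptree option set" where
  "TreeM = insert None (Some ` Tree)"

fun arityM :: "ptree option \<Rightarrow> nat" where
  "arityM None = 0"
| "arityM (Some t) = leaves t"

fun compM :: "ptree option \<Rightarrow> nat \<Rightarrow> ptree option \<Rightarrow> ptree option" where
  "compM (Some c) i (Some d) = Some (graft c i d)"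
| "compM (Some c) i None = (if c = Leaf then None else Some (face c i))"
| "compM None i x = None"

text \<open>An operad is given by a carrier C, an arity function and partial compositions
  \<open>cp c i d = c \<circ>_i d\<close>.  Elements of \<Lambda>(QC) are finitely supported
  rational functions on C (formal finite Q-linear combinations of elements of C).\<close>

definition supp :: "('a \<Rightarrow> rat) \<Rightarrow> 'a set" where
  "supp x = {c. x c \<noteq> 0}"

definition LieAlg :: "'a set \<Rightarrow> ('a \<Rightarrow> rat) set" where
  "LieAlg C = {x. finite (supp x) \<and> supp x \<subseteq> C}"

definition basis_bracket ::
  "('a \<Rightarrow> nat) \<Rightarrow> ('a \<Rightarrow> nat \<Rightarrow> 'a \<Rightarrow> 'a) \<Rightarrow> 'a \<Rightarrow> 'a \<Rightarrow> ('a \<Rightarrow> rat)" where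
  "basis_bracket ar cp c d = (\<lambda>z.
     (\<Sum>t\<in>{1..ar d}. if cp d t c = z then 1 else 0)
   - (\<Sum>s\<in>{1..ar c}. if cp c s d = z then 1 else 0))"

definition lie_bracket ::
  "('a \<Rightarrow> nat) \<Rightarrow> ('a \<Rightarrow> nat \<Rightarrow> 'a \<Rightarrow> 'a) \<Rightarrow> ('a \<Rightarrow> rat) \<Rightarrow> ('a \<Rightarrow> rat) \<Rightarrow> ('a \<Rightarrow> rat)" where
  "lie_bracket ar cp x y = (\<lambda>z.
     \<Sum>c\<in>supp x. \<Sum>d\<in>supp y. x c * y d * basis_bracket ar cp c d z)"

inductive_set lie_span ::
  "('a \<Rightarrow> nat) \<Rightarrow> ('a \<Rightarrow> nat \<Rightarrow> 'a \<Rightarrow> 'a) \<Rightarrow> ('a \<Rightarrow> rat) set \<Rightarrow> ('a \<Rightarrow> rat) set"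
  for ar cp S where
  gen: "x \<in> S \<Longrightarrow> x \<in> lie_span ar cp S"
| zero: "(\<lambda>_. 0) \<in> lie_span ar cp S"
| add: "x \<in> lie_span ar cp S \<Longrightarrow> y \<in> lie_span ar cp S \<Longrightarrow> (\<lambda>z. x z + y z) \<in> lie_span ar cp S"
| smult: "x \<in> lie_span ar cp S \<Longrightarrow> (\<lambda>z. r * x z) \<in> lie_span ar cp S"
| bracket: "x \<in> lie_span ar cp S \<Longrightarrow> y \<in> lie_span ar cp S \<Longrightarrow> lie_bracket ar cp x y \<in> lie_span ar cp S"

definition lie_fin_gen ::
  "'a set \<Rightarrow> ('a \<Rightarrow> nat) \<Rightarrow> ('a \<Rightarrow> nat \<Rightarrow> 'a \<Rightarrow> 'a) \<Rightarrow> bool" where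
  "lie_fin_gen C ar cp \<longleftrightarrow>
     (\<exists>S. finite S \<and> S \<subseteq> LieAlg C \<and> lie_span ar cp S = LieAlg C)"

end

theory Submission imports Defs begin

lemma span_closed0:
  assumes cl: "\<And>c d t. P c \<Longrightarrow> P d \<Longrightarrow> t \<in> {1..ar d} \<Longrightarrow> P (cp d t c)"
  and S: "\<And>x z. x \<in> S \<Longrightarrow> x z \<noteq> 0 \<Longrightarrow> P z"
  shows "x \<in> lie_span ar cp S \<Longrightarrow> x z \<noteq> 0 \<Longrightarrow> P z"
proof (induction x arbitrary: z rule: lie_span.induct)
  case (gen x) then show ?case using S by blast
next
  case zero then show ?case by simp
next
  case (add x y) then show ?case by (cases "x z = 0") auto
next
  case (smult x r) then show ?case by fastforce
next
  case (bracket x y)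
  have "(\<Sum>c\<in>supp x. \<Sum>d\<in>supp y. x c * y d * basis_bracket ar cp c d z) \<noteq> 0"
    using bracket.prems by (simp add: lie_bracket_def)
  then obtain c where c: "c \<in> supp x"
    and h: "(\<Sum>d\<in>supp y. x c * y d * basis_bracket ar cp c d z) \<noteq> 0"
    by (rule sum.not_neutral_contains_not_neutral)
  from h obtain d where d: "d \<in> supp y" and h2: "x c * y d * basis_bracket ar cp c d z \<noteq> 0"
    by (rule sum.not_neutral_contains_not_neutral)
  have nz: "basis_bracket ar cp c d z \<noteq> 0" using h2 by simp
  have Pc: "P c" using bracket.IH(1) c by (simp add: supp_def)
  have Pd: "P d" using bracket.IH(2) d by (simp add: supp_def)
  have "(\<exists>t\<in>{1..ar d}. cp d t c = z) \<or> (\<exists>s\<in>{1..ar c}. cp c s d = z)"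
  proof (rule ccontr)
    assume "\<not> ?thesis"
    then have "(\<Sum>t\<in>{1..ar d}. if cp d t c = z then 1 else (0::rat)) = 0"
      "(\<Sum>s\<in>{1..ar c}. if cp c s d = z then 1 else (0::rat)) = 0"
      by (auto intro: sum.neutral)
    then show False using nz unfolding basis_bracket_def by simp
  qed
  then show ?case using cl Pc Pd by blast
qed

lemma wf_Node_iff[simp]: "wf_tree (Node ts) \<longleftrightarrow> length ts \<ge> 2 \<and> (\<forall>t\<in>set ts. wf_tree t)"
  by (subst wf_tree.simps) auto

lemma wf_Leaf[simp]: "wf_tree Leaf" by (rule wf_tree.intros)

lemma span_closed:
  assumes "x \<in> lie_span ar cp S" "x z \<noteq> 0"
  and "\<And>c d t. P c \<Longrightarrow> P d \<Longrightarrow> t \<in> {1..ar d} \<Longrightarrow> P (cp d t c)"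
  and "\<And>x z. x \<in> S \<Longrightarrow> x z \<noteq> 0 \<Longrightarrow> P z"
  shows "P z"
  using span_closed0[of P ar cp S x z] assms by blast

fun maxv :: "ptree \<Rightarrow> nat" and maxvl :: "ptree list \<Rightarrow> nat" where
  "maxv Leaf = 0"
| "maxv (Node ts) = max (length ts) (maxvl ts)"
| "maxvl [] = 0"
| "maxvl (t # ts) = max (maxv t) (maxvl ts)"

lemma graft_maxv:
  "maxv (graft c i d) \<le> max (maxv c) (maxv d)"
  "maxvl (graft_list ts i d) \<le> max (maxvl ts) (maxv d) \<and> length (graft_list ts i d) = length ts"
  by (induction c i d and ts i d rule: graft_graft_list.induct) auto

lemma graft_wf:
  "wf_tree c \<Longrightarrow> wf_tree d \<Longrightarrow> wf_tree (graft c i d)"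
  "(\<forall>t\<in>set ts. wf_tree t) \<Longrightarrow> wf_tree d \<Longrightarrow> (\<forall>t\<in>set (graft_list ts i d). wf_tree t) \<and> length (graft_list ts i d) = length ts"
proof (induction c i d and ts i d rule: graft_graft_list.induct)
  case (2 ts i T)
  then show ?case by auto
qed (auto intro: wf_tree.intros)

lemma erase_Node_cases:
  assumes "erase (Node ts) i = Some u"
  obtains t where "erase_list ts i = [t]" "u = t"
  | t1 t2 r where "erase_list ts i = t1 # t2 # r" "u = Node (t1 # t2 # r)"
  using assms by (cases "erase_list ts i" rule: remdups_adj.cases) auto

lemma erase_maxv:
  "erase c i = Some u \<Longrightarrow> maxv u \<le> maxv c"
  "maxvl (erase_list ts i) \<le> maxvl ts \<and> length (erase_list ts i) \<le> length ts"
proof (induction c i and ts i arbitrary: u rule: erase_erase_list.induct)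
  case (1 i) then show ?case by (simp split: if_splits)
next
  case (2 ts i)
  from 2(2) show ?case
  proof (cases rule: erase_Node_cases)
    case (1 t) then show ?thesis using 2(1) by (simp add: le_max_iff_disj)
  next
    case (2 t1 t2 r) then show ?thesis using "2.IH" by (simp add: max_def)
  qed
next
  case (3 i) then show ?case by simp
next
  case (4 t ts i)
  show ?case
  proof (cases "i \<le> leaves t")
    case True
    then show ?thesis using 4 by (cases "erase t i") auto
  next
    case False
    then show ?thesis using 4 by auto
  qed
qed

lemma erase_wf:
  "wf_tree c \<Longrightarrow> erase c i = Some u \<Longrightarrow> wf_tree u"
  "(\<forall>t\<in>set ts. wf_tree t) \<Longrightarrow> (\<forall>t\<in>set (erase_list ts i). wf_tree t) \<and> length ts \<le> length (erase_list ts i) + 1"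
proof (induction c i and ts i arbitrary: u rule: erase_erase_list.induct)
  case (1 i) then show ?case by (simp split: if_splits)
next
  case (2 ts i)
  have ts: "\<forall>t\<in>set ts. wf_tree t" using "2.prems"(1) by simp
  from 2(3) show ?case
  proof (cases rule: erase_Node_cases)
    case (1 t) then show ?thesis using "2.IH" ts by simp
  next
    case (2 t1 t2 r) then show ?thesis using "2.IH" ts by simp
  qed
next
  case (3 i) then show ?case by simp
next
  case (4 t ts i)
  show ?case
  proof (cases "i \<le> leaves t")
    case True
    have wt: "wf_tree t" and wts: "\<forall>x\<in>set ts. wf_tree x" using "4.prems" by auto
    show ?thesis
    proof (cases "erase t i")
      case None then show ?thesis using True wts by simp
    next
      case (Some u)
      have "wf_tree u" using "4.IH"(1)[OF True wt Some] .
      then show ?thesis using True wts Some by simp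
    qed
  next
    case False
    have wt: "wf_tree t" and wts: "\<forall>x\<in>set ts. wf_tree x" using "4.prems" by auto
    have "(\<forall>x\<in>set (erase_list ts (i - leaves t)). wf_tree x) \<and> length ts \<le> length (erase_list ts (i - leaves t)) + 1"
      using "4.IH"(2)[OF False wts] .
    then show ?thesis using False wt by simp
  qed
qed

lemma erase_some:
  assumes "wf_tree c" "c \<noteq> Leaf"
  shows "\<exists>u. erase c i = Some u"
proof -
  from assms obtain ts where c: "c = Node ts" "length ts \<ge> 2" "\<forall>t\<in>set ts. wf_tree t"
    using assms by (cases c) auto
  then have "length (erase_list ts i) \<ge> 1" using erase_wf(2)[of ts i] by auto
  then show ?thesis using c by (cases "erase_list ts i" rule: remdups_adj.cases) auto
qed
lemma maxv_corolla: "maxv (Node (replicate n Leaf)) = n"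
proof -
  have "maxvl (replicate n Leaf) = 0" by (induction n) auto
  then show ?thesis by simp
qed

lemma wf_corolla: "n \<ge> 2 \<Longrightarrow> wf_tree (Node (replicate n Leaf))"
  by simp

theorem corollary6p5:
  shows "\<not> lie_fin_gen Tree leaves graft \<and> \<not> lie_fin_gen TreeM arityM compM"
proof
  show "\<not> lie_fin_gen Tree leaves graft"
  proof
    assume "lie_fin_gen Tree leaves graft"
    then obtain S where S: "finite S" "S \<subseteq> LieAlg Tree" "lie_span leaves graft S = LieAlg Tree"
      unfolding lie_fin_gen_def by blast
    define U where "U = (\<Union>x\<in>S. supp x)"
    have fU: "finite U" using S(1,2) unfolding U_def LieAlg_def by auto
    define N where "N = (\<Sum>t\<in>U. maxv t)"
    have UN: "t \<in> U \<Longrightarrow> maxv t \<le> N" for t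
      unfolding N_def using fU by (intro member_le_sum) auto
    define K where "K = Node (replicate (N+2) Leaf)"
    define \<delta> where "\<delta> = (\<lambda>z. if z = K then (1::rat) else 0)"
    have "supp \<delta> = {K}" unfolding supp_def \<delta>_def by auto
    then have "\<delta> \<in> LieAlg Tree" unfolding LieAlg_def Tree_def K_def by simp
    then have "\<delta> \<in> lie_span leaves graft S" using S(3) by simp
    moreover have "\<delta> K \<noteq> 0" unfolding \<delta>_def by simp
    ultimately have "maxv K \<le> N"
    proof (rule span_closed[where P="\<lambda>t. maxv t \<le> N"])
      fix c d t assume "maxv c \<le> N" "maxv d \<le> N"
      then show "maxv (graft d t c) \<le> N" using graft_maxv(1)[of d t c] by simp
    next
      fix x z assume "x \<in> S" "x z \<noteq> 0"
      then have "z \<in> U" unfolding U_def supp_def by auto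
      then show "maxv z \<le> N" by (rule UN)
    qed
    then show False unfolding K_def maxv_corolla by simp
  qed
next
  show "\<not> lie_fin_gen TreeM arityM compM"
  proof
    assume "lie_fin_gen TreeM arityM compM"
    then obtain S where S: "finite S" "S \<subseteq> LieAlg TreeM" "lie_span arityM compM S = LieAlg TreeM"
      unfolding lie_fin_gen_def by blast
    define U where "U = (\<Union>x\<in>S. supp x)"
    have fU: "finite U" using S(1,2) unfolding U_def LieAlg_def by auto
    have UT: "U \<subseteq> TreeM" using S(2) unfolding U_def LieAlg_def by auto
    define N where "N = (\<Sum>t\<in>U. maxv (the t))"
    have UN: "t \<in> U \<Longrightarrow> maxv (the t) \<le> N" for t
      unfolding N_def using fU by (intro member_le_sum) auto
    define P where "P = (\<lambda>z. case z of None \<Rightarrow> True | Some t \<Rightarrow> wf_tree t \<and> maxv t \<le> N)"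
    define K where "K = Node (replicate (N+2) Leaf)"
    define \<delta> where "\<delta> = (\<lambda>z. if z = Some K then (1::rat) else 0)"
    have "supp \<delta> = {Some K}" unfolding supp_def \<delta>_def by auto
    then have "\<delta> \<in> LieAlg TreeM" unfolding LieAlg_def TreeM_def Tree_def K_def by simp
    then have "\<delta> \<in> lie_span arityM compM S" using S(3) by simp
    moreover have "\<delta> (Some K) \<noteq> 0" unfolding \<delta>_def by simp
    ultimately have "P (Some K)"
    proof (rule span_closed[where P=P])
      fix c d t assume Pc: "P c" and Pd: "P d"
      show "P (compM d t c)"
      proof (cases d)
        case None then show ?thesis by (simp add: P_def)
      next
        case (Some d')
        show ?thesis
        proof (cases c)
          case None
          show ?thesis
          proof (cases "d' = Leaf")
            case True then show ?thesis using Some None by (simp add: P_def)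
          next
            case False
            have wd: "wf_tree d'" "maxv d' \<le> N" using Pd Some by (auto simp: P_def)
            then obtain u where u: "erase d' t = Some u" using erase_some False by blast
            have "wf_tree u" using erase_wf(1)[OF wd(1) u] .
            moreover have "maxv u \<le> N" using erase_maxv(1)[OF u] wd by simp
            ultimately show ?thesis using Some None False u by (simp add: P_def face_def)
          qed
        next
          case (Some c')
          then show ?thesis using Pc Pd \<open>d = Some d'\<close> graft_maxv(1)[of d' t c'] graft_wf(1)[of d' c' t]
            by (auto simp: P_def)
        qed
      qed
    next
      fix x z assume "x \<in> S" "x z \<noteq> 0"
      then have "z \<in> U" unfolding U_def supp_def by auto
      then show "P z" using UN[of z] UT unfolding P_def TreeM_def Tree_def by (auto split: option.splits)
    qed
    then show False unfolding P_def K_def maxv_corolla by simp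
  qed
qed

end
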